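(* Let $m\ge1$, let $(t_{i,j})$ be positive reals with $t_{i+m,j-m}=t_{i,j}$ and $t_{i+2,j+2}=t_{i,j}$, and let $T_{i,j,k}$ be the solution of the $T$-system with initial data $T_{i,j,(i+j+1\bmod2)}=t_{i,j}$. For $k\ge1$, $i+j+k\equiv0\pmod2$, let $L_{i,j,k}=\frac{T_{i+1,j,k}T_{i-1,j,k}}{T_{i,j,k+1}T_{i,j,k-1}}$ and $R_{i,j,k}=\frac{T_{i,j+1,k}T_{i,j-1,k}}{T_{i,j,k+1}T_{i,j,k-1}}$. Then for all such $(i,j,k)$, $$L_{i+2,j+2,k}=L_{i,j,k},\quad L_{i+m,j-m,k}=L_{i,j,k},\quad L_{i+1,j+1,k+2}=L_{i,j,k},$$ and the same three identities hold for $R$.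
   Context: The $T$-system is $T_{i,j,k+1}T_{i,j,k-1}=T_{i+1,j,k}T_{i-1,j,k}+T_{i,j+1,k}T_{i,j-1,k}$ for $k\ge1$, $i+j+k\equiv0\pmod2$, on points $(i,j,k)\in\mathbb{Z}^2\times\mathbb{Z}_{\ge0}$ with $i+j+k\equiv1\pmod2$. *)

theory Defs
  imports Complex_Main
begin

text \<open>Solution of the T-system on int x int x nat with initial data
  T(i,j,k0) = t(i,j) where k0 = (i+j+1) mod 2. Values at points with
  i+j+k even (off the lattice) are irrelevant junk; the recursion for
  lattice points only refers to lattice points.\<close>
fun Tsys :: "(int \<Rightarrow> int \<Rightarrow> real) \<Rightarrow> int \<Rightarrow> int \<Rightarrow> nat \<Rightarrow> real" where
  "Tsys t i j 0 = t i j"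
| "Tsys t i j (Suc 0) = t i j"
| "Tsys t i j (Suc (Suc k)) =
     (Tsys t (i+1) j (Suc k) * Tsys t (i-1) j (Suc k)
      + Tsys t i (j+1) (Suc k) * Tsys t i (j-1) (Suc k)) / Tsys t i j k"

definition Lsys :: "(int \<Rightarrow> int \<Rightarrow> real) \<Rightarrow> int \<Rightarrow> int \<Rightarrow> nat \<Rightarrow> real" where
  "Lsys t i j k = (Tsys t (i+1) j k * Tsys t (i-1) j k) / (Tsys t i j (k+1) * Tsys t i j (k-1))"

definition Rsys :: "(int \<Rightarrow> int \<Rightarrow> real) \<Rightarrow> int \<Rightarrow> int \<Rightarrow> nat \<Rightarrow> real" where
  "Rsys t i j k = (Tsys t i (j+1) k * Tsys t i (j-1) k) / (Tsys t i j (k+1) * Tsys t i j (k-1))"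

end

theory Submission
  imports Defs
begin

lemma Tpos: assumes "\<And>i j. t i j > 0" shows "Tsys t i j k > 0"
proof (induction k arbitrary: i j rule: less_induct)
  case (less k)
  show ?case
  proof (cases k)
    case (Suc k') then show ?thesis
    proof (cases k')
      case (Suc n) then show ?thesis using less \<open>k = Suc k'\<close>
        by (auto intro!: divide_pos_pos add_pos_pos mult_pos_pos)
    qed (auto simp: assms)
  qed (auto simp: assms)
qed

lemma Tshift: assumes "\<And>i j. t (i+a) (j+b) = t i j"
  shows "Tsys t (i+a) (j+b) k = Tsys t i j k"
proof (induction k arbitrary: i j rule: less_induct)
  case (less k)
  show ?case
  proof (cases k)
    case (Suc k') then show ?thesis
    proof (cases k')
      case (Suc n)
      have e1: "i + a + 1 = (i+1) + a" "i + a - 1 = (i-1) + a" "j + b + 1 = (j+1)+b" "j+b-1 = (j-1)+b" by auto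
      have lt: "Suc n < k" "n < k" using Suc \<open>k = Suc k'\<close> by auto
      show ?thesis unfolding \<open>k = Suc k'\<close> Suc Tsys.simps e1 less[OF lt(1)] less[OF lt(2)] ..
    qed (auto simp: assms)
  qed (auto simp: assms)
qed

definition Dd where "Dd t i j n = Tsys t i j (Suc (Suc n)) * Tsys t i j n"

lemma Dd_eq: assumes "\<And>i j. t i j > 0"
  shows "Dd t i j n = Tsys t (i+1) j (Suc n) * Tsys t (i-1) j (Suc n)
      + Tsys t i (j+1) (Suc n) * Tsys t i (j-1) (Suc n)"
proof -
  have "Tsys t i j n > 0" by (rule Tpos[OF assms])
  then show ?thesis by (simp add: Dd_def)
qed

lemma Dd_shift: assumes "\<And>i j. t i j > 0" "\<And>i j. t (i+2) (j+2) = t i j"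
  shows "Dd t (i+1) (j+1) n = Dd t i j n"
proof -
  have s: "\<And>i j k. Tsys t (i+2) (j+2) k = Tsys t i j k" using Tshift[where a=2 and b=2] assms(2) by blast
  have a: "Tsys t (i+1+1) (j+1) (Suc n) = Tsys t i (j-1) (Suc n)"
    using s[of i "j-1" "Suc n"] by (simp add: algebra_simps)
  have b: "Tsys t (i+1) (j+1+1) (Suc n) = Tsys t (i-1) j (Suc n)"
    using s[of "i-1" j "Suc n"] by (simp add: algebra_simps)
  show ?thesis unfolding Dd_eq[OF assms(1)] using a b by (simp add: algebra_simps)
qed

theorem mainTheorem7:
  fixes t :: "int \<Rightarrow> int \<Rightarrow> real" and m :: int
  assumes "m \<ge> 1"
    and "\<And>i j. t i j > 0"
    and "\<And>i j. t (i+m) (j-m) = t i j"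
    and "\<And>i j. t (i+2) (j+2) = t i j"
  shows "\<forall>i j (k::nat). k \<ge> 1 \<and> even (i + j + int k) \<longrightarrow>
      Lsys t (i+2) (j+2) k = Lsys t i j k \<and>
      Lsys t (i+m) (j-m) k = Lsys t i j k \<and>
      Lsys t (i+1) (j+1) (k+2) = Lsys t i j k \<and>
      Rsys t (i+2) (j+2) k = Rsys t i j k \<and>
      Rsys t (i+m) (j-m) k = Rsys t i j k \<and>
      Rsys t (i+1) (j+1) (k+2) = Rsys t i j k"
proof (intro allI impI)
  fix i j :: int and k :: nat
  assume "k \<ge> 1 \<and> even (i + j + int k)"
  then obtain n where kn: "k = Suc n" by (cases k) auto
  have s2: "\<And>i j k. Tsys t (i+2) (j+2) k = Tsys t i j k" using Tshift[where a=2 and b=2] assms(4) by blast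
  have sm: "\<And>i j k. Tsys t (i+m) (j-m) k = Tsys t i j k" using Tshift[where a=m and b="-m"] assms(3) by simp
  have P: "\<And>i j k. Tsys t i j k > 0" using Tpos assms(2) by blast
  have L2: "Lsys t (i+2) (j+2) k = Lsys t i j k" unfolding Lsys_def
    using s2[of "i+1" j] s2[of "i-1" j] s2[of i j] by (simp add: algebra_simps)
  have R2: "Rsys t (i+2) (j+2) k = Rsys t i j k" unfolding Rsys_def
    using s2[of i "j+1"] s2[of i "j-1"] s2[of i j] by (simp add: algebra_simps)
  have Lm: "Lsys t (i+m) (j-m) k = Lsys t i j k" unfolding Lsys_def
    using sm[of "i+1" j] sm[of "i-1" j] sm[of i j] by (simp add: algebra_simps)
  have Rm: "Rsys t (i+m) (j-m) k = Rsys t i j k" unfolding Rsys_def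
    using sm[of i "j+1"] sm[of i "j-1"] sm[of i j] by (simp add: algebra_simps)
  have DS: "\<And>i j n. Dd t (i+1) (j+1) n = Dd t i j n" using Dd_shift assms(2,4) by blast
  define E where "E = (\<lambda>k. Tsys t (i+1) j k * Tsys t (i-1) j k)"
  define F where "F = (\<lambda>k. Tsys t i (j+1) k * Tsys t i (j-1) k)"
  have DE: "\<And>n. Dd t i j n = E (Suc n) + F (Suc n)" unfolding E_def F_def using Dd_eq assms(2) by blast
  have key: "E k * E (k+2) = F k * F (k+2)"
  proof -
    have "E k * E (k+2) = Dd t (i+1) j k * Dd t (i-1) j k"
      unfolding E_def Dd_def by (simp add: algebra_simps)
    also have "Dd t (i+1) j k = Dd t i (j-1) k" using DS[of i "j-1" k] by simp
    also have "Dd t (i-1) j k = Dd t i (j+1) k" using DS[of "i-1" j k] by simp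
    also have "Dd t i (j-1) k * Dd t i (j+1) k = F k * F (k+2)"
      unfolding F_def Dd_def by (simp add: algebra_simps)
    finally show ?thesis .
  qed
  have Ep: "\<And>k. E k > 0" unfolding E_def using P by (simp add: mult_pos_pos)
  have Fp: "\<And>k. F k > 0" unfolding F_def using P by (simp add: mult_pos_pos)
  have Lij: "\<And>k. Lsys t i j (Suc k) = E (Suc k) / (E (Suc k) + F (Suc k))"
    unfolding Lsys_def using DE unfolding Dd_def E_def by (simp add: mult.commute)
  have Rij: "\<And>k. Rsys t i j (Suc k) = F (Suc k) / (E (Suc k) + F (Suc k))"
    unfolding Rsys_def using DE unfolding Dd_def F_def by (simp add: mult.commute)
  have Ls: "Lsys t (i+1) (j+1) (k+2) = Rsys t i j (k+2)"
  proof -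
    have a: "Tsys t (i+1+1) (j+1) (k+2) = Tsys t i (j-1) (k+2)"
      using s2[of i "j-1"] by (simp add: algebra_simps numeral_3_eq_3 del: Tsys.simps)
    have b: "Tsys t (i+1) (j+1) (k+3) * Tsys t (i+1) (j+1) (k+1) = Tsys t i j (k+3) * Tsys t i j (k+1)"
      using DS[of i j "k+1"] unfolding Dd_def by (simp add: algebra_simps numeral_3_eq_3 del: Tsys.simps)
    show ?thesis unfolding Lsys_def Rsys_def using a b by (simp add: algebra_simps numeral_3_eq_3 del: Tsys.simps)
  qed
  have Rs: "Rsys t (i+1) (j+1) (k+2) = Lsys t i j (k+2)"
  proof -
    have a: "Tsys t (i+1) (j+1+1) (k+2) = Tsys t (i-1) j (k+2)"
      using s2[of "i-1" j] by (simp add: algebra_simps numeral_3_eq_3 del: Tsys.simps)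
    have b: "Tsys t (i+1) (j+1) (k+3) * Tsys t (i+1) (j+1) (k+1) = Tsys t i j (k+3) * Tsys t i j (k+1)"
      using DS[of i j "k+1"] unfolding Dd_def by (simp add: algebra_simps numeral_3_eq_3 del: Tsys.simps)
    show ?thesis unfolding Lsys_def Rsys_def using a b by (simp add: algebra_simps numeral_3_eq_3 del: Tsys.simps)
  qed
  have fr: "\<And>a b c d :: real. a > 0 \<Longrightarrow> b > 0 \<Longrightarrow> c > 0 \<Longrightarrow> d > 0 \<Longrightarrow> a * c = b * d \<Longrightarrow>
     d / (c + d) = a / (a + b) \<and> c / (c + d) = b / (a + b)"
    by (auto simp: field_simps)
  have k2: "k + 2 = Suc (k+1)" by simp
  have "Rsys t i j (k+2) = Lsys t i j k \<and> Lsys t i j (k+2) = Rsys t i j k"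
    unfolding k2 Rij Lij using fr[OF Ep Fp Ep Fp key] unfolding kn
    by (simp add: Lij Rij)
  thus "Lsys t (i+2) (j+2) k = Lsys t i j k \<and>
      Lsys t (i+m) (j-m) k = Lsys t i j k \<and>
      Lsys t (i+1) (j+1) (k+2) = Lsys t i j k \<and>
      Rsys t (i+2) (j+2) k = Rsys t i j k \<and>
      Rsys t (i+m) (j-m) k = Rsys t i j k \<and>
      Rsys t (i+1) (j+1) (k+2) = Rsys t i j k"
    using L2 R2 Lm Rm Ls Rs by simp
qed

end
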